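(* Let $q$ be a prime power, $k\ge 1$, $d\ge1$, and write $d=\sigma q^{k-1}-\sum_{i=0}^{k-2}\varepsilon_i q^i$ with $\sigma$ an integer and $0\le \varepsilon_i\le q-1$. Let $C$ be a linear $[n,k,d]_q$ code with $n=g_q(k,d)$. Then for every $1\le r\le k$, \[ d_r(C)=v_r\Bigl(\sigma q^{k-r}-\sum_{i=r}^{k-1}\varepsilon_{i-1}q^{i-r}\Bigr)-\sum_{i=1}^{r-1}\varepsilon_{i-1}v_i, \] and $C$ attains the Griesmer bound for the $r$th generalized Hamming weight, i.e. $n=g_q^{(r)}(k,d_r(C))$.
   Context: $v_j=(q^j-1)/(q-1)$. An $[n,k,d]_q$ code is a $k$-dimensional subspace of $\mathbb{F}_q^n$ with minimum Hamming distance $d$. $g_q(k,d)=\sum_{i=0}^{k-1}\lceil d/q^i\rceil$ (the Griesmer bound). For a subcode $C'\le C$, its support is the set of coordinates in which some codeword of $C'$ is nonzero; the $r$th generalized Hamming weight $d_r(C)$ is the minimum support size of an $r$-dimensional subcode of $C$. For $1\le r\le k$, $g_q^{(r)}(k,d)=d+\sum_{i=1}^{k-r}\lceil d/(q^iv_r)\rceil$. *)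

theory Defs
  imports "HOL-Analysis.Analysis"
begin

text \<open>Codes of length n = CARD('n) over the finite field 'a (q = CARD('a), a prime power):
  linear subspaces of 'a^'n, using the vector-space interpretation vec of Cartesian_Space.\<close>

definition hamming_dist :: "'a::zero ^ 'n \<Rightarrow> 'a ^ 'n \<Rightarrow> nat" where
  "hamming_dist x y = card {i. x $ i \<noteq> y $ i}"

definition min_dist :: "('a::zero ^ 'n) set \<Rightarrow> nat" where
  "min_dist C = Min {hamming_dist x y | x y. x \<in> C \<and> y \<in> C \<and> x \<noteq> y}"

definition is_linear_code :: "('a::{field,finite} ^ 'n) set \<Rightarrow> nat \<Rightarrow> nat \<Rightarrow> bool" where
  "is_linear_code C k d \<longleftrightarrow> vec.subspace C \<and> vec.dim C = k \<and> min_dist C = d"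

definition code_support :: "('a::zero ^ 'n) set \<Rightarrow> 'n set" where
  "code_support D = {i. \<exists>x\<in>D. x $ i \<noteq> 0}"

definition gen_weight :: "('a::{field,finite} ^ 'n) set \<Rightarrow> nat \<Rightarrow> nat" where
  "gen_weight C r = Min {card (code_support D) | D. vec.subspace D \<and> D \<subseteq> C \<and> vec.dim D = r}"

definition vnum :: "nat \<Rightarrow> nat \<Rightarrow> nat" where
  "vnum q j = (q ^ j - 1) div (q - 1)"

definition griesmer :: "nat \<Rightarrow> nat \<Rightarrow> nat \<Rightarrow> nat" where
  "griesmer q k d = (\<Sum>i<k. nat \<lceil>real d / real q ^ i\<rceil>)"

definition griesmer_r :: "nat \<Rightarrow> nat \<Rightarrow> nat \<Rightarrow> nat \<Rightarrow> nat" where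
  "griesmer_r q r k d = d + (\<Sum>i\<in>{1..k-r}. nat \<lceil>real d / (real q ^ i * real (vnum q r))\<rceil>)"

end

theory Submission
  imports Defs
begin


definition cd :: "nat \<Rightarrow> nat \<Rightarrow> nat" where "cd a b = (a + b - 1) div b"
definition gr :: "nat \<Rightarrow> nat \<Rightarrow> nat \<Rightarrow> nat" where "gr q k d = (\<Sum>i<k. cd d (q ^ i))"

lemma cd_ge: "b > 0 \<Longrightarrow> a \<le> cd a b * b"
proof -
  assume b: "b > 0"
  have "(a+b-1) div b * b + (a+b-1) mod b = a+b-1" by (rule div_mult_mod_eq)
  moreover have "(a+b-1) mod b < b" using b by simp
  ultimately show ?thesis unfolding cd_def by linarith
qed

lemma cd_lt: "b > 0 \<Longrightarrow> cd a b * b < a + b"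
proof -
  assume b: "b > 0"
  have "(a+b-1) div b * b + (a+b-1) mod b = a+b-1" by (rule div_mult_mod_eq)
  thus ?thesis unfolding cd_def using b by linarith
qed

lemma cd_char: "b > 0 \<Longrightarrow> a \<le> Z * b \<Longrightarrow> Z * b < a + b \<Longrightarrow> cd a b = Z"
proof -
  assume b: "b > 0" and h1: "a \<le> Z * b" and h2: "Z * b < a + b"
  have "cd a b * b < Z * b + b" using cd_lt[OF b, of a] h1 by linarith
  hence "cd a b * b < (Z + 1) * b" by (simp add: algebra_simps)
  hence A: "cd a b < Z + 1" using mult_less_cancel2 by blast
  have "Z * b < cd a b * b + b" using cd_ge[OF b, of a] h2 by linarith
  hence "Z * b < (cd a b + 1) * b" by (simp add: algebra_simps)
  hence B: "Z < cd a b + 1" using mult_less_cancel2 by blast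
  show ?thesis using A B by linarith
qed

lemma cd_le: "b > 0 \<Longrightarrow> a \<le> Y * b \<Longrightarrow> cd a b \<le> Y"
proof -
  assume b: "b > 0" and h: "a \<le> Y * b"
  have "cd a b * b < Y * b + b" using cd_lt[OF b, of a] h by linarith
  hence "cd a b * b < (Y + 1) * b" by (simp add: algebra_simps)
  hence "cd a b < Y + 1" using mult_less_cancel2 by blast
  thus ?thesis by linarith
qed

lemma cd_gt: "b > 0 \<Longrightarrow> Y * b < a \<Longrightarrow> Y < cd a b"
proof -
  assume b: "b > 0" and h: "Y * b < a"
  have "Y * b < cd a b * b" using cd_ge[OF b, of a] h by linarith
  thus ?thesis using mult_less_cancel2 by blast
qed

lemma cd_mono: "a \<le> a' \<Longrightarrow> cd a b \<le> cd a' b"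
  unfolding cd_def by (simp add: div_le_mono)

lemma cd_1[simp]: "cd a 1 = a" unfolding cd_def by simp

lemma cd_cd: assumes b: "b > 0" and c: "c > 0" shows "cd (cd a b) c = cd a (b * c)"
proof -
  define Z where "Z = cd (cd a b) c"
  have bc: "b * c > 0" using b c by simp
  have 1: "cd a b \<le> Z * c" using cd_ge[OF c] Z_def by simp
  have 2: "Z * c < cd a b + c" using cd_lt[OF c] Z_def by simp
  have "a \<le> cd a b * b" by (rule cd_ge[OF b])
  also have "\<dots> \<le> Z * c * b" using 1 by simp
  finally have A: "a \<le> Z * (b * c)" by (simp add: algebra_simps)
  have "Z * c + 1 \<le> cd a b + c" using 2 by linarith
  hence "(Z * c + 1) * b \<le> (cd a b + c) * b" by (rule mult_le_mono1)
  hence "Z * c * b + b \<le> cd a b * b + c * b" by (simp add: algebra_simps)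
  moreover have "cd a b * b < a + b" by (rule cd_lt[OF b])
  ultimately have B: "Z * (b * c) < a + b * c" by (simp add: algebra_simps)
  show ?thesis using cd_char[OF bc A B] Z_def by simp
qed

lemma ceil_cd: assumes "b > 0" shows "nat \<lceil>real a / real b\<rceil> = cd a b"
proof -
  have "\<lceil>real a / real b\<rceil> = int (cd a b)"
  proof (rule ceiling_unique)
    have "real a \<le> real (cd a b) * real b" using cd_ge[OF assms, of a] by (metis of_nat_le_iff of_nat_mult)
    thus "real a / real b \<le> real_of_int (int (cd a b))" using assms by (simp add: divide_le_eq)
    have "real (cd a b) * real b < real a + real b" using cd_lt[OF assms, of a] by (metis of_nat_add of_nat_less_iff of_nat_mult)
    hence "real (cd a b) - 1 < real a / real b" using assms by (simp add: field_simps)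
    thus "real_of_int (int (cd a b)) - 1 < real a / real b" by simp
  qed
  thus ?thesis by simp
qed

lemma gr_Suc: assumes "q > 0" shows "gr q (Suc k) d = d + gr q k (cd d q)"
proof -
  have "gr q (Suc k) d = cd d (q^0) + (\<Sum>i<k. cd d (q ^ Suc i))"
    unfolding gr_def by (rule sum.lessThan_Suc_shift)
  also have "(\<Sum>i<k. cd d (q ^ Suc i)) = (\<Sum>i<k. cd (cd d q) (q ^ i))"
    using assms by (intro sum.cong refl) (simp add: cd_cd)
  finally show ?thesis unfolding gr_def by (simp add: cd_def)
qed

lemma gr_mono: "d \<le> d' \<Longrightarrow> gr q k d \<le> gr q k d'"
  unfolding gr_def by (intro sum_mono cd_mono)

lemma gr_strict: assumes "q > 0" "k \<ge> 1" "d < w" shows "gr q k d < gr q k w"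
proof -
  obtain m where k: "k = Suc m" using assms(2) by (cases k) auto
  have "gr q m (cd d q) \<le> gr q m (cd w q)" using assms by (intro gr_mono cd_mono) simp
  thus ?thesis using k gr_Suc[OF assms(1)] assms(3) by simp
qed

lemma griesmer_gr: "q > 0 \<Longrightarrow> griesmer q k d = gr q k d"
  unfolding griesmer_def gr_def
proof (intro sum.cong refl)
  fix x assume "q > 0"
  thus "nat \<lceil>real d / real q ^ x\<rceil> = cd d (q ^ x)" using ceil_cd[of "q^x" d] by simp
qed

lemma vnum_sum: assumes "q \<ge> 2" shows "vnum q j = (\<Sum>i<j. q ^ i)"
proof -
  have "(q - 1) * (\<Sum>i<j. q ^ i) = q ^ j - 1"
  proof (induction j)
    case 0 then show ?case by simp
  next
    case (Suc j)
    have "q ^ j \<ge> 1" using assms by simp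
    have "(q - 1) * (\<Sum>i<Suc j. q ^ i) = (q ^ j - 1) + (q - 1) * q ^ j"
      using Suc by (simp add: algebra_simps)
    also have "\<dots> = q ^ Suc j - 1" using \<open>q ^ j \<ge> 1\<close> assms
      by (simp add: algebra_simps diff_mult_distrib)
    finally show ?case .
  qed
  moreover have "q - 1 > 0" using assms by simp
  ultimately show ?thesis unfolding vnum_def by (metis nonzero_mult_div_cancel_left not_less0)
qed

lemma vnum_Suc: "q \<ge> 2 \<Longrightarrow> vnum q (Suc r) = q * vnum q r + 1"
proof -
  assume q: "q \<ge> 2"
  have "(\<Sum>i<Suc r. q ^ i) = q^0 + (\<Sum>i<r. q ^ Suc i)" by (rule sum.lessThan_Suc_shift)
  also have "(\<Sum>i<r. q ^ Suc i) = q * (\<Sum>i<r. q ^ i)" by (simp add: sum_distrib_left)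
  finally show ?thesis using q by (simp add: vnum_sum)
qed

lemma vnum_0: "vnum q 0 = 0" unfolding vnum_def by simp


lemma L_bound:
  assumes q: "q \<ge> 1" and e: "\<And>j. j < m \<Longrightarrow> 0 \<le> \<epsilon> j \<and> \<epsilon> j \<le> int q - 1"
  shows "0 \<le> (\<Sum>j<m. \<epsilon> j * int q ^ j) \<and> (\<Sum>j<m. \<epsilon> j * int q ^ j) \<le> int q ^ m - 1"
  using e
proof (induction m)
  case 0 then show ?case by simp
next
  case (Suc m)
  have IH: "0 \<le> (\<Sum>j<m. \<epsilon> j * int q ^ j) \<and> (\<Sum>j<m. \<epsilon> j * int q ^ j) \<le> int q ^ m - 1"
    using Suc by simp
  have e0: "0 \<le> \<epsilon> m" "\<epsilon> m \<le> int q - 1" using Suc.prems by auto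
  have p: "0 \<le> int q ^ m" by simp
  have "\<epsilon> m * int q ^ m \<le> (int q - 1) * int q ^ m" using e0(2) p by (rule mult_right_mono)
  moreover have "0 \<le> \<epsilon> m * int q ^ m" using e0 p by simp
  moreover have "(int q - 1) * int q ^ m = int q ^ Suc m - int q ^ m" by (simp add: algebra_simps)
  ultimately show ?case using IH by simp
qed

definition Xf :: "int \<Rightarrow> (nat \<Rightarrow> int) \<Rightarrow> nat \<Rightarrow> nat \<Rightarrow> nat \<Rightarrow> int" where
  "Xf \<sigma> \<epsilon> q k j = \<sigma> * int q ^ (k - 1 - j) - (\<Sum>jj\<in>{j..<k-1}. \<epsilon> jj * int q ^ (jj - j))"

lemma A1:
  assumes q2: "q \<ge> 2"
    and eps: "\<And>i. i < k - 1 \<Longrightarrow> 0 \<le> \<epsilon> i \<and> \<epsilon> i \<le> int q - 1"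
    and dd: "int d = \<sigma> * int q ^ (k - 1) - (\<Sum>i\<in>{0..<k-1}. \<epsilon> i * int q ^ i)"
    and ik: "i < k" and d1: "d \<ge> 1"
  shows "int (cd d (q ^ i)) = Xf \<sigma> \<epsilon> q k i"
proof -
  define X where "X = Xf \<sigma> \<epsilon> q k i"
  define L where "L = (\<Sum>j<i. \<epsilon> j * int q ^ j)"
  have Lb: "0 \<le> L \<and> L \<le> int q ^ i - 1" unfolding L_def
    using q2 eps ik by (intro L_bound) auto
  have split: "(\<Sum>j\<in>{0..<k-1}. \<epsilon> j * int q ^ j) = L + (\<Sum>j\<in>{i..<k-1}. \<epsilon> j * int q ^ j)"
    unfolding L_def lessThan_atLeast0 using ik by (intro sum.atLeastLessThan_concat[symmetric]) auto
  have s2: "(\<Sum>jj\<in>{i..<k-1}. \<epsilon> jj * int q ^ (jj - i)) * int q ^ i = (\<Sum>j\<in>{i..<k-1}. \<epsilon> j * int q ^ j)"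
    unfolding sum_distrib_right
  proof (intro sum.cong refl)
    fix j assume "j \<in> {i..<k-1}"
    hence "j - i + i = j" by simp
    thus "\<epsilon> j * int q ^ (j - i) * int q ^ i = \<epsilon> j * int q ^ j"
      by (metis mult.assoc power_add)
  qed
  have s1: "int q ^ (k - 1 - i) * int q ^ i = int q ^ (k - 1)"
    using ik by (metis Nat.le_diff_conv2 add.commute le_add_diff_inverse less_Suc_eq_le Suc_pred' power_add
      gr_implies_not_zero not_gr_zero diff_add less_imp_le_nat diff_less_Suc) 
  have XQ: "X * int q ^ i = int d + L"
    unfolding X_def Xf_def using dd split s1 s2 by (simp add: algebra_simps)
  have Qp: "int q ^ i > 0" using q2 by simp
  have "X * int q ^ i > 0" using XQ Lb d1 by simp
  hence Xp: "X > 0" using Qp by (simp add: zero_less_mult_iff)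
  have c1: "d \<le> nat X * q ^ i"
  proof -
    have "int d \<le> int (nat X * q ^ i)" using XQ Lb Xp by simp
    thus ?thesis by (simp only: of_nat_le_iff)
  qed
  have c2: "nat X * q ^ i < d + q ^ i"
  proof -
    have "int (nat X * q ^ i) < int (d + q ^ i)" using XQ Lb Xp by simp
    thus ?thesis by (simp only: of_nat_less_iff)
  qed
  have "cd d (q ^ i) = nat X" using q2 c1 c2 by (intro cd_char) auto
  thus ?thesis using Xp X_def by simp
qed


definition Ff :: "int \<Rightarrow> (nat \<Rightarrow> int) \<Rightarrow> nat \<Rightarrow> nat \<Rightarrow> nat \<Rightarrow> int" where
  "Ff \<sigma> \<epsilon> q k r = int (vnum q r) * (\<sigma> * int q ^ (k - r)
          - (\<Sum>i\<in>{r..k-1}. \<epsilon> (i - 1) * int q ^ (i - r)))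
       - (\<Sum>i\<in>{1..r-1}. \<epsilon> (i - 1) * int (vnum q i))"

lemma claim_a:
  assumes "k \<ge> 1"
  shows "(\<Sum>i\<in>{Suc r..k-1}. \<epsilon> (i - 1) * int q ^ (i - Suc r)) = (\<Sum>j\<in>{r..<k-1}. \<epsilon> j * int q ^ (j - r))"
proof -
  obtain k' where k: "k = Suc k'" using assms by (cases k) auto
  have "{Suc r..k-1} = {Suc r..<Suc k'}" using k by auto
  hence "(\<Sum>i\<in>{Suc r..k-1}. \<epsilon> (i - 1) * int q ^ (i - Suc r)) = (\<Sum>j\<in>{r..<k'}. \<epsilon> (Suc j - 1) * int q ^ (Suc j - Suc r))"
    by (simp only: sum.shift_bounds_Suc_ivl)
  thus ?thesis using k by simp
qed

lemma claim_c:
  assumes "r \<ge> 1" "Suc r \<le> k"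
  shows "\<sigma> * int q ^ (k - r) - (\<Sum>i\<in>{r..k-1}. \<epsilon> (i - 1) * int q ^ (i - r)) = int q * Xf \<sigma> \<epsilon> q k r - \<epsilon> (r - 1)"
proof -
  have ins: "{r..k-1} = insert r {Suc r..k-1}" using assms by auto
  have "(\<Sum>i\<in>{r..k-1}. \<epsilon> (i - 1) * int q ^ (i - r)) = \<epsilon> (r - 1) + (\<Sum>i\<in>{Suc r..k-1}. \<epsilon> (i - 1) * int q ^ (i - r))"
    unfolding ins by simp
  also have "(\<Sum>i\<in>{Suc r..k-1}. \<epsilon> (i - 1) * int q ^ (i - r)) = int q * (\<Sum>i\<in>{Suc r..k-1}. \<epsilon> (i - 1) * int q ^ (i - Suc r))"
    unfolding sum_distrib_left
  proof (intro sum.cong refl)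
    fix i assume "i \<in> {Suc r..k-1}"
    hence "i - r = Suc (i - Suc r)" by auto
    thus "\<epsilon> (i - 1) * int q ^ (i - r) = int q * (\<epsilon> (i - 1) * int q ^ (i - Suc r))" by simp
  qed
  also have "(\<Sum>i\<in>{Suc r..k-1}. \<epsilon> (i - 1) * int q ^ (i - Suc r)) = (\<Sum>j\<in>{r..<k-1}. \<epsilon> j * int q ^ (j - r))"
    using assms by (intro claim_a) auto
  finally have e1: "(\<Sum>i\<in>{r..k-1}. \<epsilon> (i - 1) * int q ^ (i - r)) = \<epsilon> (r - 1) + int q * (\<Sum>j\<in>{r..<k-1}. \<epsilon> j * int q ^ (j - r))" .
  have "k - r = Suc (k - 1 - r)" using assms by auto
  hence e2: "int q ^ (k - r) = int q * int q ^ (k - 1 - r)" by simp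
  show ?thesis unfolding Xf_def e1 e2 by (simp add: algebra_simps)
qed

lemma A2:
  assumes q2: "q \<ge> 2" and k1: "k \<ge> 1"
  shows "r \<le> k \<Longrightarrow> (\<Sum>j<r. Xf \<sigma> \<epsilon> q k j) = Ff \<sigma> \<epsilon> q k r"
proof (induction r)
  case 0 then show ?case by (simp add: Ff_def vnum_0)
next
  case (Suc r)
  have IH: "(\<Sum>j<r. Xf \<sigma> \<epsilon> q k j) = Ff \<sigma> \<epsilon> q k r" using Suc by simp
  define S where "S = (\<Sum>i\<in>{1..r-1}. \<epsilon> (i - 1) * int (vnum q i))"
  have Fr: "Ff \<sigma> \<epsilon> q k r = int (vnum q r) * (int q * Xf \<sigma> \<epsilon> q k r - \<epsilon> (r - 1)) - S"
  proof (cases "r = 0")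
    case True then show ?thesis by (simp add: Ff_def vnum_0 S_def)
  next
    case False
    then show ?thesis unfolding Ff_def S_def using claim_c[of r k \<sigma> q \<epsilon>] Suc.prems by simp
  qed
  have b: "(\<Sum>i\<in>{1..Suc r - 1}. \<epsilon> (i - 1) * int (vnum q i)) = S + \<epsilon> (r - 1) * int (vnum q r)"
  proof (cases "r = 0")
    case True then show ?thesis by (simp add: vnum_0 S_def)
  next
    case False
    hence "{1..r} = insert r {1..r-1}" by auto
    moreover have "(\<Sum>i\<in>insert r {1..r-1}. \<epsilon> (i - 1) * int (vnum q i)) = \<epsilon> (r - 1) * int (vnum q r) + (\<Sum>i\<in>{1..r-1}. \<epsilon> (i - 1) * int (vnum q i))"
      by (rule sum.insert) auto
    ultimately have "(\<Sum>i\<in>{1..r}. \<epsilon> (i - 1) * int (vnum q i)) = \<epsilon> (r - 1) * int (vnum q r) + (\<Sum>i\<in>{1..r-1}. \<epsilon> (i - 1) * int (vnum q i))"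
      by simp
    thus ?thesis unfolding S_def by simp
  qed
  have br: "\<sigma> * int q ^ (k - Suc r) - (\<Sum>i\<in>{Suc r..k-1}. \<epsilon> (i - 1) * int q ^ (i - Suc r)) = Xf \<sigma> \<epsilon> q k r"
    unfolding Xf_def claim_a[OF k1] by simp
  have FS: "Ff \<sigma> \<epsilon> q k (Suc r) = int (vnum q (Suc r)) * Xf \<sigma> \<epsilon> q k r - (S + \<epsilon> (r - 1) * int (vnum q r))"
    unfolding Ff_def br b ..
  show ?case using IH Fr FS vnum_Suc[OF q2, of r] by (simp add: algebra_simps)
qed

lemma sum_shift_r: fixes f :: "nat \<Rightarrow> 'b::comm_monoid_add" shows "(\<Sum>j\<in>{r..<r+m}. f j) = (\<Sum>i\<in>{1..m}. f (r + i - 1))"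
  by (induction m) (auto simp: add.commute)

lemma P_point:
  assumes q2: "q \<ge> 2" and r1: "r \<ge> 1" and i1: "i \<ge> 1" and d1: "d \<ge> 1"
  shows "cd (gr q r d) (q ^ i * vnum q r) = cd d (q ^ (r + i - 1))"
proof -
  define m where "m = r + i - 1"
  define Z where "Z = cd d (q ^ m)"
  have qm: "q ^ m > 0" using q2 by simp
  have "0 < Z" unfolding Z_def using cd_gt[OF qm, of 0 d] d1 by simp
  then obtain W where ZW: "Z = Suc W" by (cases Z) auto
  have dZ: "d \<le> Z * q ^ m" unfolding Z_def by (rule cd_ge[OF qm])
  have dW: "W * q ^ m < d" using cd_lt[OF qm, of d] ZW Z_def by simp
  have pw: "q ^ (m - j) * q ^ j = q ^ m" if "j < r" for j
    using that unfolding m_def by (metis add.commute le_add_diff_inverse2 power_add less_imp_le_nat le_add1 le_trans diff_le_mono2 add_diff_cancel_left' Nat.le_diff_conv2 i1 less_Suc_eq_le Suc_le_eq add_le_mono) 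
  have V: "(\<Sum>j<r. q ^ (m - j)) = q ^ i * vnum q r"
  proof -
    have "(\<Sum>j<r. q ^ (m - j)) = (\<Sum>j<r. q ^ i * q ^ (r - Suc j))"
    proof (intro sum.cong refl)
      fix j assume "j \<in> {..<r}"
      hence "m - j = i + (r - Suc j)" unfolding m_def using i1 by auto
      thus "q ^ (m - j) = q ^ i * q ^ (r - Suc j)" by (simp add: power_add)
    qed
    also have "\<dots> = q ^ i * (\<Sum>j<r. q ^ (r - Suc j))" by (simp add: sum_distrib_left)
    also have "(\<Sum>j<r. q ^ (r - Suc j)) = (\<Sum>j<r. q ^ j)" by (rule sum.nat_diff_reindex)
    finally show ?thesis using vnum_sum[OF q2] by simp
  qed
  have up: "gr q r d \<le> Z * (q ^ i * vnum q r)"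
  proof -
    have "gr q r d \<le> (\<Sum>j<r. Z * q ^ (m - j))" unfolding gr_def
    proof (intro sum_mono)
      fix j assume "j \<in> {..<r}"
      hence "Z * q ^ (m - j) * q ^ j = Z * q ^ m" using pw by (simp only: mult.assoc lessThan_iff)
      hence "d \<le> Z * q ^ (m - j) * q ^ j" using dZ by linarith
      thus "cd d (q ^ j) \<le> Z * q ^ (m - j)" using q2 by (intro cd_le) auto
    qed
    thus ?thesis using V by (metis sum_distrib_left)
  qed
  have lo: "W * (q ^ i * vnum q r) < gr q r d"
  proof -
    have "(\<Sum>j<r. W * q ^ (m - j)) < gr q r d" unfolding gr_def
    proof (intro sum_strict_mono)
      show "{..<r} \<noteq> {}" using r1 by (simp add: lessThan_empty_iff)
      fix j assume "j \<in> {..<r}"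
      hence "W * q ^ (m - j) * q ^ j = W * q ^ m" using pw by (simp only: mult.assoc lessThan_iff)
      hence "W * q ^ (m - j) * q ^ j < d" using dW by linarith
      thus "W * q ^ (m - j) < cd d (q ^ j)" using q2 by (intro cd_gt) auto
    qed simp
    thus ?thesis using V by (metis sum_distrib_left)
  qed
  obtain r' where "r = Suc r'" using r1 by (cases r) auto
  hence "vnum q r > 0" using vnum_Suc[OF q2, of r'] by simp
  hence pos: "q ^ i * vnum q r > 0" using q2 by simp
  have "cd (gr q r d) (q ^ i * vnum q r) = Z"
    using pos up lo ZW by (intro cd_char) auto
  thus ?thesis unfolding Z_def m_def .
qed


lemma G_eq:
  assumes q2: "q \<ge> 2" and r1: "r \<ge> 1" and rk: "r \<le> k" and d1: "d \<ge> 1"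
  shows "griesmer_r q r k (gr q r d) = gr q k d"
proof -
  have "griesmer_r q r k (gr q r d) = gr q r d + (\<Sum>i\<in>{1..k-r}. cd d (q ^ (r + i - 1)))"
    unfolding griesmer_r_def
  proof (intro arg_cong2[where f="(+)"] refl sum.cong)
    fix i assume "i \<in> {1..k-r}"
    hence i1: "i \<ge> 1" by simp
    have pos: "q ^ i * vnum q r > 0"
    proof -
      obtain r' where "r = Suc r'" using r1 by (cases r) auto
      hence "vnum q r > 0" using vnum_Suc[OF q2, of r'] by simp
      thus ?thesis using q2 by simp
    qed
    have "nat \<lceil>real (gr q r d) / (real q ^ i * real (vnum q r))\<rceil> = nat \<lceil>real (gr q r d) / real (q ^ i * vnum q r)\<rceil>"
      by simp
    also have "\<dots> = cd (gr q r d) (q ^ i * vnum q r)" by (rule ceil_cd[OF pos])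
    also have "\<dots> = cd d (q ^ (r + i - 1))" by (rule P_point[OF q2 r1 i1 d1])
    finally show "nat \<lceil>real (gr q r d) / (real q ^ i * real (vnum q r))\<rceil> = cd d (q ^ (r + i - 1))" .
  qed
  also have "(\<Sum>i\<in>{1..k-r}. cd d (q ^ (r + i - 1))) = (\<Sum>j\<in>{r..<r+(k-r)}. cd d (q ^ j))"
    by (rule sum_shift_r[symmetric])
  also have "gr q r d + \<dots> = gr q k d"
    unfolding gr_def lessThan_atLeast0 using rk by (simp add: sum.atLeastLessThan_concat)
  finally show ?thesis .
qed

lemma F_eq:
  assumes q2: "q \<ge> 2"
    and eps: "\<And>i. i < k - 1 \<Longrightarrow> 0 \<le> \<epsilon> i \<and> \<epsilon> i \<le> int q - 1"
    and dd: "int d = \<sigma> * int q ^ (k - 1) - (\<Sum>i\<in>{0..<k-1}. \<epsilon> i * int q ^ i)"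
    and rk: "r \<le> k" and k1: "k \<ge> 1" and d1: "d \<ge> 1"
  shows "int (gr q r d) = Ff \<sigma> \<epsilon> q k r"
proof -
  have "int (gr q r d) = (\<Sum>j<r. int (cd d (q ^ j)))" unfolding gr_def by simp
  also have "\<dots> = (\<Sum>j<r. Xf \<sigma> \<epsilon> q k j)"
    using rk by (intro sum.cong refl A1[OF q2 eps dd _ d1]) auto
  also have "\<dots> = Ff \<sigma> \<epsilon> q k r" by (rule A2[OF q2 k1 rk])
  finally show ?thesis .
qed



definition supp :: "'a::zero ^ 'n \<Rightarrow> 'n set" where "supp x = {i. x $ i \<noteq> 0}"
definition wt :: "'a::zero ^ 'n \<Rightarrow> nat" where "wt x = card (supp x)"
definition proj :: "'n set \<Rightarrow> 'a::zero ^ 'n \<Rightarrow> 'a ^ 'n" where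
  "proj T x = (\<chi> i. if i \<in> T then 0 else x $ i)"

lemma proj_add: "proj T (x + y) = proj T x + proj T (y :: 'a::monoid_add ^ 'n)"
  unfolding proj_def by (simp add: vec_eq_iff)

lemma proj_scale: "proj T (a *s x) = a *s proj T (x :: 'a::field ^ 'n)"
  unfolding proj_def by (simp add: vec_eq_iff)

lemma proj_diff: "proj T (x - y) = proj T x - proj T (y :: 'a::group_add ^ 'n)"
  unfolding proj_def by (simp add: vec_eq_iff)

lemma proj_0[simp]: "proj T 0 = 0"
  unfolding proj_def by (simp add: vec_eq_iff)

lemma proj_supp[simp]: "proj (supp c) c = 0"
  unfolding proj_def supp_def by (simp add: vec_eq_iff)

lemma supp_proj: "supp (proj T x) = supp x - T"
  unfolding proj_def supp_def by auto

lemma proj_eq_0_iff: "proj T x = 0 \<longleftrightarrow> supp x \<subseteq> T"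
  unfolding proj_def supp_def by (auto simp: vec_eq_iff)

lemma linear_proj: "Vector_Spaces.linear (*s) (*s) (proj T :: 'a::field ^ 'n \<Rightarrow> _)"
  unfolding Vector_Spaces.linear_iff using vec.vector_space_axioms
  by (simp add: proj_add proj_scale)

lemma wt_0_iff: "wt x = 0 \<longleftrightarrow> x = 0"
  unfolding wt_def supp_def by (auto simp: vec_eq_iff)

lemma kernel:
  fixes C :: "('a::{field,finite} ^ 'n) set"
  assumes C: "vec.subspace C" and c: "c \<in> C" "c \<noteq> 0"
    and mw: "\<forall>z\<in>C. z \<noteq> 0 \<longrightarrow> wt c \<le> wt z" and x: "x \<in> C" and px: "supp x \<subseteq> supp c"
  shows "\<exists>a. x = a *s c"
proof (cases "x = 0")
  case True then show ?thesis by (intro exI[of _ 0]) simp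
next
  case False
  then obtain j where xj: "x $ j \<noteq> 0" by (auto simp: vec_eq_iff)
  hence "j \<in> supp c" using px unfolding supp_def by auto
  hence cj: "c $ j \<noteq> 0" unfolding supp_def by auto
  define \<beta> where "\<beta> = c $ j / x $ j"
  define z where "z = c - \<beta> *s x"
  have zC: "z \<in> C" unfolding z_def using C c x by (simp add: vec.subspace_diff vec.subspace_scale)
  have zj: "z $ j = 0" unfolding z_def \<beta>_def using xj by simp
  have "supp z \<subseteq> supp c - {j}"
  proof
    fix i assume "i \<in> supp z"
    hence "z $ i \<noteq> 0" unfolding supp_def by simp
    hence "c $ i \<noteq> 0 \<or> x $ i \<noteq> 0" unfolding z_def by auto
    hence "i \<in> supp c" using px unfolding supp_def by auto
    moreover have "i \<noteq> j" using zj \<open>z $ i \<noteq> 0\<close> by auto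
    ultimately show "i \<in> supp c - {j}" by simp
  qed
  hence "wt z \<le> card (supp c - {j})" unfolding wt_def by (intro card_mono) auto
  also have "\<dots> < wt c" unfolding wt_def using \<open>j \<in> supp c\<close> by (intro card_Diff1_less) auto
  finally have "z = 0" using mw zC by (meson not_le)
  hence ceq: "c = \<beta> *s x" unfolding z_def by simp
  have "\<beta> \<noteq> 0" unfolding \<beta>_def using xj cj by simp
  hence "x = inverse \<beta> *s c" unfolding ceq by (simp add: vector_smult_assoc)
  thus ?thesis by blast
qed


lemma averaging:
  fixes C :: "('a::{field,finite} ^ 'n) set"
  assumes C: "vec.subspace C" and c: "c \<in> C" "c \<noteq> 0"
    and mw: "\<forall>z\<in>C. z \<noteq> 0 \<longrightarrow> wt c \<le> wt z" and x: "x \<in> C" and px: "proj (supp c) x \<noteq> 0"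
  shows "wt c \<le> CARD('a) * wt (proj (supp c) x)"
proof -
  define T where "T = supp c"
  define A where "A = (\<lambda>\<alpha>::'a. {j\<in>T. x $ j = \<alpha> * c $ j})"
  have TU: "T = (\<Union>\<alpha>. A \<alpha>)"
  proof
    show "T \<subseteq> (\<Union>\<alpha>. A \<alpha>)"
    proof
      fix j assume "j \<in> T"
      hence "c $ j \<noteq> 0" unfolding T_def supp_def by simp
      hence "j \<in> A (x $ j / c $ j)" unfolding A_def using \<open>j \<in> T\<close> by simp
      thus "j \<in> (\<Union>\<alpha>. A \<alpha>)" by blast
    qed
  qed (auto simp: A_def)
  have cT: "card T = (\<Sum>\<alpha>\<in>UNIV. card (A \<alpha>))"
    unfolding TU
  proof (rule card_UN_disjoint)
    show "\<forall>i\<in>UNIV. \<forall>j\<in>UNIV. i \<noteq> j \<longrightarrow> A i \<inter> A j = {}"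
    proof (intro ballI impI)
      fix a b :: 'a assume "a \<noteq> b"
      show "A a \<inter> A b = {}"
      proof (rule ccontr)
        assume "A a \<inter> A b \<noteq> {}"
        then obtain j where "j \<in> A a" "j \<in> A b" by blast
        hence "j \<in> T" "x $ j = a * c $ j" "x $ j = b * c $ j" unfolding A_def by auto
        moreover have "c $ j \<noteq> 0" using \<open>j \<in> T\<close> unfolding T_def supp_def by simp
        ultimately show False using \<open>a \<noteq> b\<close> by simp
      qed
    qed
  qed auto
  obtain \<alpha> where al: "card T \<le> CARD('a) * card (A \<alpha>)"
  proof (rule ccontr)
    assume "\<not> thesis"
    hence lt: "\<And>\<alpha>. CARD('a) * card (A \<alpha>) < card T" using that by (meson not_le)
    have "(\<Sum>\<alpha>\<in>(UNIV::'a set). CARD('a) * card (A \<alpha>)) < (\<Sum>\<alpha>\<in>(UNIV::'a set). card T)"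
      by (rule sum_strict_mono) (auto simp: lt)
    thus False using cT by (simp add: sum_distrib_left)
  qed
  define z where "z = x - \<alpha> *s c"
  have zC: "z \<in> C" unfolding z_def using C c x by (simp add: vec.subspace_diff vec.subspace_scale)
  have pz: "proj T z = proj T x" unfolding z_def T_def by (simp add: proj_diff proj_scale)
  hence "z \<noteq> 0" using px T_def by auto
  hence "wt c \<le> wt z" using mw zC by blast
  have "supp z \<subseteq> supp (proj T x) \<union> (T - A \<alpha>)"
  proof
    fix i assume i: "i \<in> supp z"
    show "i \<in> supp (proj T x) \<union> (T - A \<alpha>)"
    proof (cases "i \<in> T")
      case True
      then show ?thesis using i unfolding z_def supp_def A_def by auto
    next
      case False
      hence "c $ i = 0" unfolding T_def supp_def by simp
      then show ?thesis using i False unfolding z_def supp_def proj_def by auto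
    qed
  qed
  hence "wt z \<le> card (supp (proj T x) \<union> (T - A \<alpha>))" unfolding wt_def by (intro card_mono) auto
  also have "\<dots> \<le> card (supp (proj T x)) + card (T - A \<alpha>)" by (rule card_Un_le)
  also have "card (T - A \<alpha>) = card T - card (A \<alpha>)" by (rule card_Diff_subset) (auto simp: A_def)
  finally have "wt c \<le> wt (proj T x) + (card T - card (A \<alpha>))" using \<open>wt c \<le> wt z\<close> unfolding wt_def by simp
  moreover have "card (A \<alpha>) \<le> card T" unfolding A_def by (intro card_mono) auto
  moreover have "wt c = card T" unfolding wt_def T_def ..
  ultimately have "card (A \<alpha>) \<le> wt (proj T x)" by linarith
  hence "CARD('a) * card (A \<alpha>) \<le> CARD('a) * wt (proj T x)" by (rule mult_le_mono2)
  hence "wt c \<le> CARD('a) * wt (proj T x)" using al \<open>wt c = card T\<close> by linarith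
  thus ?thesis unfolding T_def .
qed

lemma dim_proj:
  fixes C :: "('a::{field,finite} ^ 'n) set"
  assumes c: "c \<noteq> 0"
    and ker: "\<forall>x\<in>C. proj T x = 0 \<longrightarrow> (\<exists>a. x = a *s c)" and pc: "proj T c = 0"
    and D: "vec.subspace D" "D \<subseteq> C" "c \<in> D"
  shows "vec.dim (proj T ` D) + 1 = vec.dim D"
proof -
  have "vec.independent {c}" using c by simp
  then obtain B where B: "{c} \<subseteq> B" "B \<subseteq> D" "vec.independent B" "D \<subseteq> vec.span B"
    using vec.maximal_independent_subset_extend[of "{c}" D] D by auto
  have fB: "finite B" using B(3) by (rule vec.finiteI_independent)
  have spB: "vec.span B = D" using B D(1) vec.span_minimal by blast
  have dD: "vec.dim D = card B" using vec.dim_span_eq_card_independent[OF B(3)] spB by simp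
  define B0 where "B0 = B - {c}"
  have iB0: "vec.independent B0" unfolding B0_def using B(3) vec.independent_mono by blast
  have inj: "inj_on (proj T) (vec.span B0)"
  proof (subst vec.linear_inj_on_iff_eq_0[OF linear_proj vec.subspace_span], intro ballI impI)
    fix u assume u: "u \<in> vec.span B0" and pu: "proj T u = 0"
    have "vec.span B0 \<subseteq> vec.span B" unfolding B0_def by (intro vec.span_mono) auto
    hence "u \<in> C" using u spB D(2) by auto
    then obtain a where ua: "u = a *s c" using ker pu by blast
    show "u = 0"
    proof (rule ccontr)
      assume "u \<noteq> 0"
      hence "a \<noteq> 0" using ua by auto
      have "c = inverse a *s u" using \<open>a \<noteq> 0\<close> ua by (simp add: vector_smult_assoc)
      hence "c \<in> vec.span B0" using u by (simp add: vec.span_scale)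
      hence "vec.dependent B" unfolding vec.dependent_def B0_def using B(1) by auto
      thus False using B(3) by simp
    qed
  qed
  have d0: "vec.dim (proj T ` B0) = card B0"
    using vec.dim_image_eq[OF linear_proj inj] vec.dim_eq_card_independent[OF iB0] by simp
  have "proj T ` D = proj T ` vec.span B" using spB by simp
  also have "\<dots> = vec.span (proj T ` B)" by (rule vec.linear_span_image[OF linear_proj, symmetric])
  also have "proj T ` B = insert 0 (proj T ` B0)" unfolding B0_def using B(1) pc by auto
  finally have "vec.dim (proj T ` D) = vec.dim (proj T ` B0)" by simp
  moreover have "card B0 + 1 = card B" unfolding B0_def using B(1) fB
    by (metis card_Diff1_less_iff card_Suc_Diff1 insert_subset Suc_eq_plus1)
  ultimately show ?thesis using d0 dD by simp
qed


lemma min_weight_word: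
  fixes C :: "('a::{field,finite} ^ 'n) set"
  assumes "vec.dim C \<ge> 1"
  shows "\<exists>c\<in>C. c \<noteq> 0 \<and> (\<forall>z\<in>C. z \<noteq> 0 \<longrightarrow> wt c \<le> wt z)"
proof -
  have "vec.dim C \<noteq> 0" using assms by linarith
  hence "\<not> C \<subseteq> {0}" by simp
  then obtain x where "x \<in> C" "x \<noteq> 0" by auto
  hence "\<exists>x. x \<in> C \<and> x \<noteq> 0" by blast
  then obtain c where "c \<in> C \<and> c \<noteq> 0" "\<forall>y. y \<in> C \<and> y \<noteq> 0 \<longrightarrow> wt c \<le> wt y"
    using ex_has_least_nat[of "\<lambda>x. x \<in> C \<and> x \<noteq> 0" _ wt] by blast
  thus ?thesis by blast
qed

lemma residual:
  fixes C :: "('a::{field,finite} ^ 'n) set"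
  assumes C: "vec.subspace C" and c: "c \<in> C" "c \<noteq> 0"
    and mw: "\<forall>z\<in>C. z \<noteq> 0 \<longrightarrow> wt c \<le> wt z"
  shows "\<forall>x\<in>C. proj (supp c) x = 0 \<longrightarrow> (\<exists>a. x = a *s c)"
    and "vec.subspace (proj (supp c) ` C)"
    and "vec.dim (proj (supp c) ` C) + 1 = vec.dim C"
    and "\<forall>y\<in>proj (supp c) ` C. y \<noteq> 0 \<longrightarrow> cd (wt c) CARD('a) \<le> wt y"
proof -
  show ker: "\<forall>x\<in>C. proj (supp c) x = 0 \<longrightarrow> (\<exists>a. x = a *s c)"
    using kernel[OF C c mw] by (auto simp: proj_eq_0_iff)
  show "vec.subspace (proj (supp c) ` C)" by (rule vec.linear_subspace_image[OF linear_proj C])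
  show "vec.dim (proj (supp c) ` C) + 1 = vec.dim C"
    by (rule dim_proj[OF c(2) ker proj_supp C]) (auto simp: c)
  show "\<forall>y\<in>proj (supp c) ` C. y \<noteq> 0 \<longrightarrow> cd (wt c) CARD('a) \<le> wt y"
  proof (intro ballI impI)
    fix y assume "y \<in> proj (supp c) ` C" "y \<noteq> 0"
    then obtain x where x: "x \<in> C" "y = proj (supp c) x" by auto
    have "wt c \<le> CARD('a) * wt y" using averaging[OF C c mw x(1)] x \<open>y \<noteq> 0\<close> by simp
    hence "wt c \<le> wt y * CARD('a)" by (simp add: mult.commute)
    thus "cd (wt c) CARD('a) \<le> wt y" by (intro cd_le) auto
  qed
qed

lemma griesmer_bound:
  fixes C :: "('a::{field,finite} ^ 'n) set"
  shows "vec.subspace C \<Longrightarrow> vec.dim C = k \<Longrightarrow> \<forall>x\<in>C. x \<noteq> 0 \<longrightarrow> d \<le> wt x \<Longrightarrow> \<forall>x\<in>C. supp x \<subseteq> S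
    \<Longrightarrow> gr CARD('a) k d \<le> card S"
proof (induction k arbitrary: C S d)
  case 0 then show ?case by (simp add: gr_def)
next
  case (Suc m)
  obtain c where c: "c \<in> C" "c \<noteq> 0" and mw: "\<forall>z\<in>C. z \<noteq> 0 \<longrightarrow> wt c \<le> wt z"
    using min_weight_word[of C] Suc.prems by auto
  note R = residual[OF Suc.prems(1) c mw]
  define T where "T = supp c"
  have dR: "vec.dim (proj T ` C) = m" using R(3) Suc.prems(2) T_def by simp
  have wd: "d \<le> wt c" using Suc.prems(3) c by auto
  have wR: "\<forall>y\<in>proj T ` C. y \<noteq> 0 \<longrightarrow> cd d CARD('a) \<le> wt y"
    using R(4) cd_mono[OF wd, of "CARD('a)"] T_def by fastforce
  have sR: "\<forall>y\<in>proj T ` C. supp y \<subseteq> S - T" using Suc.prems(4) by (auto simp: supp_proj)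
  have IH: "gr CARD('a) m (cd d CARD('a)) \<le> card (S - T)"
    using Suc.IH[OF R(2)[folded T_def] dR wR sR] .
  have TS: "T \<subseteq> S" using Suc.prems(4) c T_def by auto
  have "card (S - T) = card S - wt c" unfolding wt_def T_def using TS T_def by (simp add: card_Diff_subset)
  moreover have "wt c \<le> card S" unfolding wt_def using TS T_def by (simp add: card_mono)
  moreover have "gr CARD('a) (Suc m) d = d + gr CARD('a) m (cd d CARD('a))" by (rule gr_Suc) simp
  ultimately show ?case using IH wd by linarith
qed


lemma existence:
  fixes C :: "('a::{field,finite} ^ 'n) set"
  shows "r \<le> k \<Longrightarrow> vec.subspace C \<Longrightarrow> vec.dim C = k \<Longrightarrow> \<forall>x\<in>C. x \<noteq> 0 \<longrightarrow> d \<le> wt x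
    \<Longrightarrow> \<forall>x\<in>C. supp x \<subseteq> S \<Longrightarrow> card S = gr CARD('a) k d
    \<Longrightarrow> \<exists>D. vec.subspace D \<and> D \<subseteq> C \<and> vec.dim D = r \<and> card (code_support D) \<le> gr CARD('a) r d"
proof (induction r arbitrary: k C S d)
  case 0
  have "vec.subspace {0::'a^'n}" by (rule vec.subspace_single_0)
  moreover have "{0} \<subseteq> C" using 0 vec.subspace_0 by auto
  moreover have "vec.dim {0::'a^'n} = 0" by simp
  moreover have "code_support {0::'a^'n} = {}" unfolding code_support_def by simp
  ultimately show ?case unfolding gr_def by (intro exI[of _ "{0}"]) auto
next
  case (Suc r)
  define q where "q = CARD('a)"
  have q0: "q > 0" unfolding q_def by simp
  obtain k' where kk: "k = Suc k'" using Suc.prems(1) by (cases k) auto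
  obtain c where c: "c \<in> C" "c \<noteq> 0" and mw: "\<forall>z\<in>C. z \<noteq> 0 \<longrightarrow> wt c \<le> wt z"
    using min_weight_word[of C] Suc.prems kk by auto
  note R = residual[OF Suc.prems(2) c mw]
  define T where "T = supp c"
  have wd: "d \<le> wt c" using Suc.prems(4) c by auto
  have "gr q k (wt c) \<le> card S" unfolding q_def
    using griesmer_bound[OF Suc.prems(2,3)] mw Suc.prems(5) by auto
  hence "\<not> d < wt c" using gr_strict[OF q0, of k d "wt c"] kk Suc.prems(6) q_def by auto
  hence wdeq: "wt c = d" using wd by simp
  have dR: "vec.dim (proj T ` C) = k'" using R(3) Suc.prems(3) T_def kk by simp
  have wR: "\<forall>y\<in>proj T ` C. y \<noteq> 0 \<longrightarrow> cd d CARD('a) \<le> wt y"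
    using R(4) wdeq T_def by fastforce
  have sR: "\<forall>y\<in>proj T ` C. supp y \<subseteq> S - T" using Suc.prems(5) by (auto simp: supp_proj)
  have TS: "T \<subseteq> S" using Suc.prems(5) c T_def by auto
  have gS: "gr q k d = d + gr q k' (cd d q)" unfolding kk by (rule gr_Suc[OF q0])
  have cST: "card (S - T) = gr CARD('a) k' (cd d CARD('a))"
  proof -
    have "card (S - T) = card S - card T" using TS by (simp add: card_Diff_subset)
    also have "card T = d" using wdeq unfolding T_def wt_def by simp
    finally show ?thesis using Suc.prems(6) gS q_def by simp
  qed
  obtain D1 where D1: "vec.subspace D1" "D1 \<subseteq> proj T ` C" "vec.dim D1 = r"
      "card (code_support D1) \<le> gr CARD('a) r (cd d CARD('a))"
    using Suc.IH[OF _ R(2)[folded T_def] dR wR sR cST] Suc.prems(1) kk by auto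
  define D where "D = {x\<in>C. proj T x \<in> D1}"
  have sD: "vec.subspace D" unfolding vec.subspace_def D_def
    using Suc.prems(2) D1(1)
    by (auto simp: proj_add proj_scale vec.subspace_0 vec.subspace_add vec.subspace_scale)
  have DC: "D \<subseteq> C" unfolding D_def by auto
  have cD: "c \<in> D" unfolding D_def T_def using c D1(1) by (simp add: vec.subspace_0)
  have pD: "proj T ` D = D1"
  proof
    show "proj T ` D \<subseteq> D1" unfolding D_def by auto
    show "D1 \<subseteq> proj T ` D"
    proof
      fix y assume "y \<in> D1"
      then obtain x where "x \<in> C" "y = proj T x" using D1(2) by auto
      thus "y \<in> proj T ` D" unfolding D_def using \<open>y \<in> D1\<close> by auto
    qed
  qed
  have dD: "vec.dim D = Suc r"
    using dim_proj[OF c(2) R(1) proj_supp sD DC cD] pD D1(3) T_def by simp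
  have "code_support D \<subseteq> T \<union> code_support D1"
  proof
    fix i assume "i \<in> code_support D"
    then obtain x where x: "x \<in> D" "x $ i \<noteq> 0" unfolding code_support_def by auto
    show "i \<in> T \<union> code_support D1"
    proof (cases "i \<in> T")
      case False
      hence "proj T x $ i \<noteq> 0" using x unfolding proj_def by simp
      moreover have "proj T x \<in> D1" using x D_def by auto
      ultimately show ?thesis unfolding code_support_def by blast
    qed simp
  qed
  hence "card (code_support D) \<le> card (T \<union> code_support D1)" by (intro card_mono) auto
  also have "\<dots> \<le> card T + card (code_support D1)" by (rule card_Un_le)
  also have "card T = d" using wdeq unfolding T_def wt_def by simp
  finally have "card (code_support D) \<le> gr CARD('a) (Suc r) d"
    using D1(4) gr_Suc[OF q0, of r d] q_def by simp
  thus ?case using sD DC dD by blast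
qed


lemma card_field_ge2: "CARD('a::{field,finite}) \<ge> 2"
proof -
  have "card {0::'a, 1} = 2" by simp
  moreover have "card {0::'a, 1} \<le> CARD('a)" by (rule card_mono) auto
  ultimately show ?thesis by simp
qed

theorem mainTheorem2:
  fixes C :: "('a::{field,finite} ^ 'n) set"
    and k d :: nat and \<sigma> :: int and \<epsilon> :: "nat \<Rightarrow> int"
  assumes "k \<ge> 1" and "d \<ge> 1"
    and "\<And>i. i < k - 1 \<Longrightarrow> 0 \<le> \<epsilon> i \<and> \<epsilon> i \<le> int CARD('a) - 1"
    and "int d = \<sigma> * int CARD('a) ^ (k - 1) - (\<Sum>i\<in>{0..<k-1}. \<epsilon> i * int CARD('a) ^ i)"
    and "is_linear_code C k d"
    and "CARD('n) = griesmer CARD('a) k d"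
  shows "\<forall>r\<in>{1..k}.
     int (gen_weight C r) =
       int (vnum CARD('a) r) * (\<sigma> * int CARD('a) ^ (k - r)
          - (\<Sum>i\<in>{r..k-1}. \<epsilon> (i - 1) * int CARD('a) ^ (i - r)))
       - (\<Sum>i\<in>{1..r-1}. \<epsilon> (i - 1) * int (vnum CARD('a) i))
     \<and> CARD('n) = griesmer_r CARD('a) r k (gen_weight C r)"
proof -
  define q where "q = CARD('a)"
  have q2: "q \<ge> 2" unfolding q_def by (rule card_field_ge2)
  have sub: "vec.subspace C" and dC: "vec.dim C = k" and md: "min_dist C = d"
    using assms(5) unfolding is_linear_code_def by auto
  have wts: "\<forall>x\<in>C. x \<noteq> 0 \<longrightarrow> d \<le> wt x"
  proof (intro ballI impI)
    fix x assume x: "x \<in> C" "x \<noteq> 0"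
    define M where "M = {hamming_dist x y | x y. x \<in> C \<and> y \<in> C \<and> x \<noteq> y}"
    have fM: "finite M"
    proof (rule finite_subset)
      show "M \<subseteq> (\<lambda>(x, y). hamming_dist x y) ` (UNIV :: (('a^'n) \<times> ('a^'n)) set)"
      proof
        fix m assume "m \<in> M"
        then obtain a b :: "'a^'n" where "m = hamming_dist a b" unfolding M_def by blast
        thus "m \<in> (\<lambda>(x, y). hamming_dist x y) ` (UNIV :: (('a^'n) \<times> ('a^'n)) set)" by (intro rev_image_eqI[of "(a, b)"]) auto
      qed
    qed simp
    have "hamming_dist x 0 \<in> M" unfolding M_def using x sub vec.subspace_0 by blast
    hence "Min M \<le> hamming_dist x 0" using fM by simp
    moreover have "hamming_dist x 0 = wt x" unfolding hamming_dist_def wt_def supp_def by simp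
    ultimately show "d \<le> wt x" using md unfolding min_dist_def M_def by simp
  qed
  have sS: "\<forall>x\<in>C. supp x \<subseteq> UNIV" by simp
  have cS: "card (UNIV :: 'n set) = gr CARD('a) k d"
    using assms(6) griesmer_gr[of "CARD('a)" k d] by simp
  show ?thesis
  proof (intro ballI conjI)
    fix r assume r: "r \<in> {1..k}"
    define M where "M = {card (code_support D) | D. vec.subspace D \<and> D \<subseteq> C \<and> vec.dim D = r}"
    have fM: "finite M"
    proof (rule finite_subset)
      show "M \<subseteq> (\<lambda>D. card (code_support D)) ` (UNIV :: ('a^'n) set set)" unfolding M_def by auto
    qed simp
    obtain D0 where D0: "vec.subspace D0" "D0 \<subseteq> C" "vec.dim D0 = r" "card (code_support D0) \<le> gr CARD('a) r d"
      using existence[OF _ sub dC wts sS cS] r by auto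
    have "card (code_support D0) \<in> M" unfolding M_def using D0 by blast
    hence m1: "Min M \<le> gr CARD('a) r d" using fM D0(4) by (meson Min_le le_trans)
    have "M \<noteq> {}" using \<open>card (code_support D0) \<in> M\<close> by auto
    hence "Min M \<in> M" using fM by simp
    then obtain D where D: "vec.subspace D" "D \<subseteq> C" "vec.dim D = r" "Min M = card (code_support D)"
      unfolding M_def by blast
    have "gr CARD('a) r d \<le> card (code_support D)"
    proof (rule griesmer_bound[OF D(1) D(3)])
      show "\<forall>x\<in>D. x \<noteq> 0 \<longrightarrow> d \<le> wt x" using wts D(2) by auto
      show "\<forall>x\<in>D. supp x \<subseteq> code_support D" unfolding supp_def code_support_def by auto
    qed
    hence gw: "gen_weight C r = gr CARD('a) r d" using m1 D(4) unfolding gen_weight_def M_def[symmetric] by simp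
    have "int (gr CARD('a) r d) = Ff \<sigma> \<epsilon> CARD('a) k r"
      using F_eq[OF card_field_ge2 assms(3) assms(4)] r assms(2) by auto
    thus "int (gen_weight C r) =
       int (vnum CARD('a) r) * (\<sigma> * int CARD('a) ^ (k - r)
          - (\<Sum>i\<in>{r..k-1}. \<epsilon> (i - 1) * int CARD('a) ^ (i - r)))
       - (\<Sum>i\<in>{1..r-1}. \<epsilon> (i - 1) * int (vnum CARD('a) i))"
      using gw unfolding Ff_def by simp
    show "CARD('n) = griesmer_r CARD('a) r k (gen_weight C r)"
      using gw G_eq[OF card_field_ge2[where 'a='a], of r k d] r assms(2) cS by simp
  qed
qed

end
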